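(* For all positive integers $n,k$, $$WS(n+k) \geq S(k)\left(WS(n) + \left\lceil \frac{WS(n)}{2}\right\rceil + 1\right) + WS(n).$$
   Context: A set $A \subseteq \mathbb{N}$ is sum-free if for all $(a,b)\in A^2$ (allowing $a=b$), $a+b \notin A$. A set $B\subseteq\mathbb{N}$ is weakly sum-free if for all $(a,b)\in B^2$ with $a\neq b$, $a+b\notin B$. $S(n)$ (the Schur number) is the largest $p$ such that $\{1,\dots,p\}$ can be partitioned into $n$ sum-free subsets; $WS(n)$ (the weak Schur number) is the largest $p$ such that $\{1,\dots,p\}$ can be partitioned into $n$ weakly sum-free subsets. *)

theory Defs
  imports Complex_Main
begin

definition sum_free :: "nat set \<Rightarrow> bool" where
  "sum_free A \<longleftrightarrow> (\<forall>a\<in>A. \<forall>b\<in>A. a + b \<notin> A)"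

definition weakly_sum_free :: "nat set \<Rightarrow> bool" where
  "weakly_sum_free B \<longleftrightarrow> (\<forall>a\<in>B. \<forall>b\<in>B. a \<noteq> b \<longrightarrow> a + b \<notin> B)"

text \<open>{1..p} can be partitioned into n sets with property P
  (parts indexed by {0..<n}; some parts may be empty).\<close>
definition partitionable :: "(nat set \<Rightarrow> bool) \<Rightarrow> nat \<Rightarrow> nat \<Rightarrow> bool" where
  "partitionable P n p \<longleftrightarrow>
     (\<exists>A :: nat \<Rightarrow> nat set.
        (\<Union>i<n. A i) = {1..p} \<and>
        (\<forall>i<n. \<forall>j<n. i \<noteq> j \<longrightarrow> A i \<inter> A j = {}) \<and>
        (\<forall>i<n. P (A i)))"

definition schur :: "nat \<Rightarrow> nat" where
  "schur n = (GREATEST p. partitionable sum_free n p)"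

definition weak_schur :: "nat \<Rightarrow> nat" where
  "weak_schur n = (GREATEST p. partitionable weakly_sum_free n p)"

end

theory Submission
  imports Defs "HOL-Library.Ramsey"
begin

lemma ws_bounded:
  "\<exists>N::nat. \<forall>p. partitionable weakly_sum_free n p \<longrightarrow> p < N"
proof -
  obtain N :: nat where N: "partn_lst {..<N} (replicate n 4) 2"
    using ramsey_full by blast
  have "p < N" if "partitionable weakly_sum_free n p" for p
  proof (rule ccontr)
    assume "\<not> p < N"
    hence pN: "N \<le> p" by simp
    from that obtain A where U: "(\<Union>i<n. A i) = {1..p}"
      and W: "\<forall>i<n. weakly_sum_free (A i)"
      unfolding partitionable_def by blast
    define f where "f e = (SOME i. i < n \<and> Max e - Min e \<in> A i)" for e :: "nat set"
    have fe: "f e < n \<and> Max e - Min e \<in> A (f e)" if e: "e \<in> nsets {..<N} 2" for e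
    proof -
      from e obtain x y where xy: "e = {x,y}" "x < y" "y < N"
        unfolding ordered_nsets_2_eq by auto
      hence "Max e - Min e = y - x" by auto
      also have "y - x \<in> {1..p}" using xy pN by auto
      finally have "\<exists>i. i < n \<and> Max e - Min e \<in> A i" using U by auto
      then show ?thesis unfolding f_def by (rule someI_ex)
    qed
    hence "f \<in> nsets {..<N} 2 \<rightarrow> {..<length (replicate n (4::nat))}" by auto
    then obtain i H where i: "i < n" and H: "H \<in> nsets {..<N} 4"
      and mono: "f ` (nsets H 2) \<subseteq> {i}"
      using partn_lstE[OF N] by (metis length_replicate nth_replicate)
    from H obtain u x y z where H4: "H = {u,x,y,z}" "u < x" "x < y" "y < z" "z < N"
      unfolding ordered_nsets_4_eq by auto
    have diff: "b - a \<in> A i" if "a \<in> H" "b \<in> H" "a < b" for a b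
    proof -
      have e: "{a,b} \<in> nsets H 2" using that by simp
      hence "{a,b} \<in> nsets {..<N} 2" using H4 that by (auto simp: nsets_def)
      hence "Max {a,b} - Min {a,b} \<in> A (f {a,b})" using fe by blast
      moreover have "f {a,b} = i" using mono e by blast
      ultimately show ?thesis using that by (simp add: max_def min_def)
    qed
    have ws: "weakly_sum_free (A i)" using W i by blast
    have d1: "x - u \<in> A i" "y - x \<in> A i" "y - u \<in> A i" "z - x \<in> A i" "z - u \<in> A i"
      using diff H4 by auto
    show False
    proof (cases "x - u = y - x")
      case False
      then have "(x - u) + (y - x) \<notin> A i" using ws d1 unfolding weakly_sum_free_def by blast
      moreover have "(x - u) + (y - x) = y - u" using H4 by simp
      ultimately show False using d1 by simp
    next
      case True
      then have "x - u \<noteq> z - x" using H4 by simp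
      then have "(x - u) + (z - x) \<notin> A i" using ws d1 unfolding weakly_sum_free_def by blast
      moreover have "(x - u) + (z - x) = z - u" using H4 by simp
      ultimately show False using d1 by simp
    qed
  qed
  then show ?thesis by blast
qed

lemma lab_add:
  fixes q1 r1 q2 r2 q3 r3 m c L :: nat
  assumes L: "L = m+c+1" and c: "2*c \<le> m+1" "m \<le> 2*c" and r: "r1 < L" "r2 < L"
    and dm: "(r1+r2<L \<and> r3=r1+r2 \<and> q3=q1+q2) \<or> (r1+r2 \<ge> L \<and> r3 = r1+r2-L \<and> q3 = q1+q2+1)"
    and n1: "\<not>(1 \<le> r1 \<and> r1 \<le> m \<and> (q1=0 \<or> m-c<r1))"
    and n2: "\<not>(1 \<le> r2 \<and> r2 \<le> m \<and> (q2=0 \<or> m-c<r2))"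
    and n3: "\<not>(1 \<le> r3 \<and> r3 \<le> m \<and> (q3=0 \<or> m-c<r3))"
    and z1: "q1 \<noteq> 0 \<or> r1 \<noteq> 0" and z2: "q2 \<noteq> 0 \<or> r2 \<noteq> 0"
  shows "(if m<r3 then q3+1 else q3) = (if m<r1 then q1+1 else q1) + (if m<r2 then q2+1 else q2)"
proof -
  have a1: "m < r1 \<or> (q1 \<noteq> 0 \<and> r1 \<le> m - c)" using n1 z1 by linarith
  have a2: "m < r2 \<or> (q2 \<noteq> 0 \<and> r2 \<le> m - c)" using n2 z2 by linarith
  show ?thesis
  proof (cases "r1+r2 < L")
    case True
    then have e: "r3 = r1+r2" "q3 = q1+q2" using dm by auto
    show ?thesis using a1 a2 e n3 True L c by (auto split: if_splits)
  next
    case False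
    then have e: "r3 = r1+r2-L" "q3 = q1+q2+1" using dm by auto
    show ?thesis using a1 a2 e n3 False L c r by (auto split: if_splits)
  qed
qed
lemma add_divmod:
  fixes x y L :: nat
  assumes "L > 0"
  shows "(x mod L + y mod L < L \<and> (x+y) mod L = x mod L + y mod L \<and> (x+y) div L = x div L + y div L)
       \<or> (x mod L + y mod L \<ge> L \<and> (x+y) mod L = x mod L + y mod L - L \<and> (x+y) div L = x div L + y div L + 1)"
proof -
  have r1: "x mod L < L" "y mod L < L" using assms by auto
  have d: "(x+y) div L = x div L + y div L + (x mod L + y mod L) div L"
    by (rule div_add1_eq)
  have m: "(x+y) mod L = (x mod L + y mod L) mod L" by (simp add: mod_add_eq)
  show ?thesis
  proof (cases "x mod L + y mod L < L")
    case True
    then show ?thesis using d m by simp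
  next
    case False
    let ?s = "x mod L + y mod L"
    have "?s = (?s - L) + L" using False by simp
    hence "?s div L = (?s - L) div L + 1" "?s mod L = (?s - L) mod L"
      using assms by (metis div_add_self2 less_not_refl2, metis mod_add_self2)
    moreover have "?s - L < L" using r1 by linarith
    ultimately show ?thesis using d m False by simp
  qed
qed

lemma construct:
  assumes PP: "partitionable weakly_sum_free n m" and QQ: "partitionable sum_free k s"
  shows "partitionable weakly_sum_free (n+k) (s*(m + (m+1) div 2 + 1) + m)"
proof -
  obtain P where PU: "(\<Union>i<n. P i) = {1..m}"
      and PD: "\<forall>i<n. \<forall>j<n. i \<noteq> j \<longrightarrow> P i \<inter> P j = {}"
      and PW: "\<forall>i<n. weakly_sum_free (P i)"
    using PP unfolding partitionable_def by blast
  obtain Q where QU: "(\<Union>i<k. Q i) = {1..s}"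
      and QD: "\<forall>i<k. \<forall>j<k. i \<noteq> j \<longrightarrow> Q i \<inter> Q j = {}"
      and QW: "\<forall>i<k. sum_free (Q i)"
    using QQ unfolding partitionable_def by blast
  define c where "c = (m+1) div 2"
  define L where "L = m + c + 1"
  define T where "T = s * L + m"
  have c1: "2*c \<le> m+1" "m \<le> 2*c" unfolding c_def by presburger+
  have Lpos: "L > 0" unfolding L_def by simp
  define isA where "isA x \<longleftrightarrow> x mod L \<in> {1..m} \<and> (x div L = 0 \<or> m - c < x mod L)" for x
  define lab where "lab x = (if m < x mod L then x div L + 1 else x div L)" for x
  define C where "C i = (if i < n then {x\<in>{1..T}. isA x \<and> x mod L \<in> P i}
                         else {x\<in>{1..T}. \<not> isA x \<and> lab x \<in> Q (i - n)})" for i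
  have labrange: "lab x \<in> {1..s}" if "x \<in> {1..T}" "\<not> isA x" for x
  proof -
    have xe: "x = x div L * L + x mod L" by simp
    have rL: "x mod L < L" using Lpos by simp
    have q: "x div L \<le> s"
    proof (rule ccontr)
      assume "\<not> x div L \<le> s"
      hence "(s+1) * L \<le> x div L * L" by (intro mult_le_mono1) simp
      thus False using xe that(1) unfolding T_def L_def by auto
    qed
    have q2: "x div L < s" if "m < x mod L"
    proof (rule ccontr)
      assume "\<not> x div L < s"
      hence "s * L \<le> x div L * L" by (intro mult_le_mono1) simp
      moreover have "x div L * L + x mod L \<le> s * L + m" using xe \<open>x \<in> {1..T}\<close> unfolding T_def by simp
      ultimately show False using that by linarith
    qed
    have "x div L \<noteq> 0 \<or> m < x mod L"
    proof (rule ccontr)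
      assume "\<not> (x div L \<noteq> 0 \<or> m < x mod L)"
      hence "x div L = 0" "x mod L \<le> m" by auto
      moreover have "x mod L \<noteq> 0" using xe \<open>x div L = 0\<close> that(1) by auto
      ultimately show False using that(2) unfolding isA_def by auto
    qed
    then show ?thesis using q q2 unfolding lab_def by auto
  qed
  have cover: "(\<Union>i<n+k. C i) = {1..T}"
  proof
    show "(\<Union>i<n+k. C i) \<subseteq> {1..T}" unfolding C_def by auto
  next
    show "{1..T} \<subseteq> (\<Union>i<n+k. C i)"
    proof
      fix x assume x: "x \<in> {1..T}"
      show "x \<in> (\<Union>i<n+k. C i)"
      proof (cases "isA x")
        case True
        then have "x mod L \<in> {1..m}" unfolding isA_def by auto
        then have "x mod L \<in> (\<Union>i<n. P i)" using PU by simp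
        then obtain i where "i < n" "x mod L \<in> P i" by blast
        then have "x \<in> C i" using x True unfolding C_def by auto
        then show ?thesis using \<open>i < n\<close> by auto
      next
        case False
        have "lab x \<in> (\<Union>i<k. Q i)" using labrange[OF x False] QU by simp
        then obtain j where "j < k" "lab x \<in> Q j" by blast
        then have "x \<in> C (n+j)" using x False unfolding C_def by auto
        then show ?thesis using \<open>j < k\<close> by auto
      qed
    qed
  qed
  have disj: "\<forall>i<n+k. \<forall>j<n+k. i \<noteq> j \<longrightarrow> C i \<inter> C j = {}"
  proof (intro allI impI)
    fix i j assume ij: "i < n+k" "j < n+k" "i \<noteq> j"
    show "C i \<inter> C j = {}"
    proof (cases "i < n")
      case True
      show ?thesis
      proof (cases "j < n")
        case True
        then show ?thesis using \<open>i < n\<close> PD ij unfolding C_def by auto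
      next
        case False
        then show ?thesis using \<open>i < n\<close> unfolding C_def by auto
      qed
    next
      case False
      show ?thesis
      proof (cases "j < n")
        case True
        then show ?thesis using \<open>\<not> i < n\<close> unfolding C_def by auto
      next
        case jF: False
        have "i - n \<noteq> j - n" "i - n < k" "j - n < k" using ij False jF by auto
        then have "Q (i-n) \<inter> Q (j-n) = {}" using QD by blast
        then show ?thesis using False jF unfolding C_def by auto
      qed
    qed
  qed
  have wsf: "weakly_sum_free (C i)" if "i < n+k" for i
    unfolding weakly_sum_free_def
  proof (intro ballI impI)
    fix x y assume x: "x \<in> C i" and y: "y \<in> C i" and xy: "x \<noteq> y"
    show "x + y \<notin> C i"
    proof
      assume z: "x + y \<in> C i"
      have dm: "(x mod L + y mod L < L \<and> (x+y) mod L = x mod L + y mod L \<and> (x+y) div L = x div L + y div L)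
       \<or> (x mod L + y mod L \<ge> L \<and> (x+y) mod L = x mod L + y mod L - L \<and> (x+y) div L = x div L + y div L + 1)"
        by (rule add_divmod[OF Lpos])
      have xe: "x = x div L * L + x mod L" "y = y div L * L + y mod L" by simp_all
      show False
      proof (cases "i < n")
        case True
        have W: "weakly_sum_free (P i)" using PW True by blast
        have Pm: "P i \<subseteq> {1..m}" using PU True by auto
        have A: "isA x" "isA y" "isA (x+y)" "x mod L \<in> P i" "y mod L \<in> P i" "(x+y) mod L \<in> P i"
          using x y z True unfolding C_def by auto
        show False
        proof (cases "x mod L + y mod L < L")
          case True
          then have e: "(x+y) mod L = x mod L + y mod L" "(x+y) div L = x div L + y div L" using dm by auto
          show False
          proof (cases "x mod L = y mod L")
            case True
            then have "x div L \<noteq> y div L" using xe xy by metis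
            then have "x div L \<noteq> 0 \<or> y div L \<noteq> 0" by auto
            then have "m - c < x mod L" using A(1,2) True unfolding isA_def by auto
            moreover have "(x+y) mod L \<le> m" using A(6) Pm by auto
            ultimately show False using e True c1 by linarith
          next
            case False
            then show False using W A(4-6) e unfolding weakly_sum_free_def by metis
          qed
        next
          case False
          then have e: "(x+y) mod L = x mod L + y mod L - L" "(x+y) div L = x div L + y div L + 1" using dm by auto
          have "x mod L \<le> m" "y mod L \<le> m" using A Pm by auto
          then show False using A(3) e c1 unfolding isA_def L_def by auto
        qed
      next
        case False
        have j: "i - n < k" using False that by simp
        have S: "sum_free (Q (i-n))" using QW j by blast
        have B: "\<not> isA x" "\<not> isA y" "\<not> isA (x+y)" "lab x \<in> Q (i-n)" "lab y \<in> Q (i-n)" "lab (x+y) \<in> Q (i-n)"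
          "x \<ge> 1" "y \<ge> 1"
          using x y z False unfolding C_def by auto
        have x0: "x div L \<noteq> 0 \<or> x mod L \<noteq> 0" "y div L \<noteq> 0 \<or> y mod L \<noteq> 0"
          using xe B(7,8) by (metis add_0 mult_0 not_one_le_zero)+
        have rl: "x mod L < L" "y mod L < L" "(x+y) mod L < L" using Lpos by auto
        have "lab (x+y) = lab x + lab y" unfolding lab_def
          by (rule lab_add[OF L_def c1 rl(1,2)]) (use dm B(1-3) x0 in \<open>auto simp: isA_def\<close>)
        then show False using S B(4-6) unfolding sum_free_def by metis
      qed
    qed
  qed
  have "partitionable weakly_sum_free (n+k) T"
    unfolding partitionable_def using cover disj wsf by blast
  then show ?thesis unfolding T_def L_def c_def .
qed


lemma sf_imp_wsf: "sum_free A \<Longrightarrow> weakly_sum_free A"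
  unfolding sum_free_def weakly_sum_free_def by blast

lemma part_mono:
  assumes "\<And>A. P A \<Longrightarrow> P' A" "partitionable P n p"
  shows "partitionable P' n p"
proof -
  from assms(2) obtain A where A: "(\<Union>i<n. A i) = {1..p}"
    "\<forall>i<n. \<forall>j<n. i \<noteq> j \<longrightarrow> A i \<inter> A j = {}" "\<forall>i<n. P (A i)"
    unfolding partitionable_def by (elim exE conjE) (rule that)
  have "\<forall>i<n. P' (A i)" using A(3) assms(1) by simp
  then show ?thesis unfolding partitionable_def using A(1,2) by (intro exI[of _ A]) simp
qed

lemma part0: "P {} \<Longrightarrow> partitionable P n 0"
  unfolding partitionable_def by (rule exI[of _ "\<lambda>_. {}"]) auto

lemma wsf0: "weakly_sum_free {}" unfolding weakly_sum_free_def by simp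
lemma sf0: "sum_free {}" unfolding sum_free_def by simp

lemma ws_facts:
  "partitionable weakly_sum_free n (weak_schur n)"
  "partitionable weakly_sum_free n p \<Longrightarrow> p \<le> weak_schur n"
proof -
  obtain N where N: "\<forall>p. partitionable weakly_sum_free n p \<longrightarrow> p < N" using ws_bounded by blast
  then have b: "\<And>p. partitionable weakly_sum_free n p \<Longrightarrow> p \<le> N" by (simp add: less_imp_le)
  show "partitionable weakly_sum_free n (weak_schur n)"
    unfolding weak_schur_def by (rule GreatestI_nat[where P="partitionable weakly_sum_free n" and b=N, OF part0[where P=weakly_sum_free, OF wsf0] b])
  show "partitionable weakly_sum_free n p \<Longrightarrow> p \<le> weak_schur n"
    unfolding weak_schur_def by (rule Greatest_le_nat[where P="partitionable weakly_sum_free n" and b=N, OF _ b])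
qed

lemma s_facts:
  "partitionable sum_free n (schur n)"
proof -
  obtain N where N: "\<forall>p. partitionable weakly_sum_free n p \<longrightarrow> p < N" using ws_bounded by blast
  have "partitionable weakly_sum_free n p" if "partitionable sum_free n p" for p
    using part_mono[OF sf_imp_wsf that] .
  then have b: "\<And>p. partitionable sum_free n p \<Longrightarrow> p \<le> N" using N by (meson less_imp_le_nat)
  show "partitionable sum_free n (schur n)"
    unfolding schur_def by (rule GreatestI_nat[where P="partitionable sum_free n" and b=N, OF part0[where P=sum_free, OF sf0] b])
qed

theorem corollary3p2:
  fixes n k :: nat
  assumes "n \<ge> 1" and "k \<ge> 1"
  shows "real (weak_schur (n + k)) \<ge>
    real (schur k) * (real (weak_schur n) + real_of_int \<lceil>real (weak_schur n) / 2\<rceil> + 1)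
    + real (weak_schur n)"
proof -
  define m where "m = weak_schur n"
  define s where "s = schur k"
  have "partitionable weakly_sum_free (n+k) (s*(m + (m+1) div 2 + 1) + m)"
    unfolding m_def s_def by (rule construct[OF ws_facts(1) s_facts])
  then have le: "s*(m + (m+1) div 2 + 1) + m \<le> weak_schur (n+k)" by (rule ws_facts(2))
  have ce: "\<lceil>real m / 2\<rceil> = int ((m+1) div 2)"
  proof -
    define d where "d = (m+1) div 2"
    have "m = 2*d \<or> m + 1 = 2*d" unfolding d_def by presburger
    then have h: "real m = 2 * real d \<or> real m + 1 = 2 * real d" by (metis of_nat_1 of_nat_add of_nat_mult of_nat_numeral)
    have "\<lceil>real m / 2\<rceil> = int d"
    proof (rule ceiling_unique)
      show "real_of_int (int d) - 1 < real m / 2" using h by auto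
      show "real m / 2 \<le> real_of_int (int d)" using h by auto
    qed
    then show ?thesis unfolding d_def .
  qed
  have "real (s*(m + (m+1) div 2 + 1) + m) \<le> real (weak_schur (n+k))" using le by linarith
  then show ?thesis unfolding m_def[symmetric] s_def[symmetric] using ce by (simp add: algebra_simps)
qed

end
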